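(* In a phase space $Z_1$, every real number $\mu$ is the exponential growth rate of some solution of the linearized Euler system with initial value in $Z_1$ (i.e. the set of finite exponential growth rates of such solutions is $\mathbb{R}$). Moreover, there exist initial values in $Z_1$ for which the exponential growth rate of the corresponding solution equals $+\infty$.
   Context: Fix constants $U_0,c_0,\rho_0>0$. Linearized Euler system: $\partial_t v_x' + U_0\partial_x v_x' + \frac1{\rho_0}\partial_x p' = 0$, $\partial_t v_y' + U_0\partial_x v_y' + \frac1{\rho_0}\partial_y p' = 0$, $\partial_t v_z' + U_0\partial_x v_z' + \frac1{\rho_0}\partial_z p' = 0$, $\partial_t p' + U_0\partial_xp' + \rho_0c_0^2(\partial_xv_x'+\partial_yv_y'+\partial_zv_z') = 0$. Phase space $Z_1$: fix real constants $k_i,l_i,m_i$ ($i=1,\dots,4$) with $k_1k_2k_3k_4\neq0$ and $\Delta = \frac{c_0\rho_0}{k_3k_4}[r_1(k_2k_3k_4+k_3m_2m_4+k_4l_2l_3) + r_2(k_1k_3k_4+k_3m_1m_4+k_4l_1l_3)]\neq0$, $r_i=\sqrt{k_i^2+l_i^2+m_i^2}$. With $\xi_i=k_ix+l_iy+m_iz$, $Z_1$ is the set of systems $(F,G,H,P)$ of the form $F = k_1f_1(\xi_1)+k_2f_2(\xi_2)+\frac{l_3}{k_3}f_3(\xi_3)+\frac{m_4}{k_4}f_4(\xi_4)$, $G = l_1f_1(\xi_1)+l_2f_2(\xi_2)-f_3(\xi_3)$, $H = m_1f_1(\xi_1)+m_2f_2(\xi_2)-f_4(\xi_4)$, $P =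 -c_0\rho_0r_1f_1(\xi_1)+c_0\rho_0r_2f_2(\xi_2)$ with $f_i:\mathbb{R}\to\mathbb{R}$ continuously differentiable, with the topology of uniform convergence on $\mathbb{R}^3$. The exponential growth rate of a solution $(v_x',v_y',v_z',p')$ is $\nu = \max\{\sup_{(x,y,z)}\limsup_{t\to\infty}\frac{\ln|v_x'(x,y,z,t)|}{t},\ \text{same for } v_y',\ v_z',\ p'\}$. *)

theory Defs
  imports "HOL-Analysis.Analysis" "HOL-Library.Liminf_Limsup"
begin

type_synonym pt3 = "real \<times> real \<times> real"
type_synonym pt4 = "real \<times> real \<times> real \<times> real"  (* (x, y, z, t) *)

definition C1_R4 :: "(pt4 \<Rightarrow> real) \<Rightarrow> bool" where
  "C1_R4 u \<longleftrightarrow> (\<exists>D :: pt4 \<Rightarrow> (pt4 \<Rightarrow>\<^sub>L real).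
      (\<forall>w. (u has_derivative blinfun_apply (D w)) (at w)) \<and> continuous_on UNIV D)"

definition dx :: "(pt4 \<Rightarrow> real) \<Rightarrow> pt4 \<Rightarrow> real" where
  "dx u w = frechet_derivative u (at w) (1, 0, 0, 0)"
definition dy :: "(pt4 \<Rightarrow> real) \<Rightarrow> pt4 \<Rightarrow> real" where
  "dy u w = frechet_derivative u (at w) (0, 1, 0, 0)"
definition dz :: "(pt4 \<Rightarrow> real) \<Rightarrow> pt4 \<Rightarrow> real" where
  "dz u w = frechet_derivative u (at w) (0, 0, 1, 0)"
definition dt :: "(pt4 \<Rightarrow> real) \<Rightarrow> pt4 \<Rightarrow> real" where
  "dt u w = frechet_derivative u (at w) (0, 0, 0, 1)"

definition lin_euler_solution ::
  "real \<Rightarrow> real \<Rightarrow> real \<Rightarrow> (pt4 \<Rightarrow> real) \<Rightarrow> (pt4 \<Rightarrow> real) \<Rightarrow> (pt4 \<Rightarrow> real) \<Rightarrow> (pt4 \<Rightarrow> real) \<Rightarrow> bool"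
where
  "lin_euler_solution U0 c0 rho0 vx vy vz p \<longleftrightarrow>
     C1_R4 vx \<and> C1_R4 vy \<and> C1_R4 vz \<and> C1_R4 p \<and>
     (\<forall>w. dt vx w + U0 * dx vx w + (1 / rho0) * dx p w = 0) \<and>
     (\<forall>w. dt vy w + U0 * dx vy w + (1 / rho0) * dy p w = 0) \<and>
     (\<forall>w. dt vz w + U0 * dx vz w + (1 / rho0) * dz p w = 0) \<and>
     (\<forall>w. dt p w + U0 * dx p w + rho0 * c0\<^sup>2 * (dx vx w + dy vy w + dz vz w) = 0)"

definition has_initial_value ::
  "(pt4 \<Rightarrow> real) \<Rightarrow> (pt4 \<Rightarrow> real) \<Rightarrow> (pt4 \<Rightarrow> real) \<Rightarrow> (pt4 \<Rightarrow> real) \<Rightarrow>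
   (pt3 \<Rightarrow> real) \<times> (pt3 \<Rightarrow> real) \<times> (pt3 \<Rightarrow> real) \<times> (pt3 \<Rightarrow> real) \<Rightarrow> bool"
where
  "has_initial_value vx vy vz p FGHP \<longleftrightarrow>
     (case FGHP of (F, G, H, P) \<Rightarrow>
       (\<forall>x y z. vx (x, y, z, 0) = F (x, y, z) \<and> vy (x, y, z, 0) = G (x, y, z) \<and>
                vz (x, y, z, 0) = H (x, y, z) \<and> p (x, y, z, 0) = P (x, y, z)))"

definition eln_abs :: "real \<Rightarrow> ereal" where
  "eln_abs r = (if r = 0 then -\<infinity> else ereal (ln \<bar>r\<bar>))"

definition comp_growth :: "(pt4 \<Rightarrow> real) \<Rightarrow> ereal" where
  "comp_growth u = (SUP q \<in> (UNIV :: pt3 set).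
      Limsup at_top (\<lambda>t::real. eln_abs (u (fst q, fst (snd q), snd (snd q), t)) / ereal t))"

definition growth_rate ::
  "(pt4 \<Rightarrow> real) \<Rightarrow> (pt4 \<Rightarrow> real) \<Rightarrow> (pt4 \<Rightarrow> real) \<Rightarrow> (pt4 \<Rightarrow> real) \<Rightarrow> ereal" where
  "growth_rate vx vy vz p =
     max (max (comp_growth vx) (comp_growth vy)) (max (comp_growth vz) (comp_growth p))"

definition rr :: "(nat \<Rightarrow> real) \<Rightarrow> (nat \<Rightarrow> real) \<Rightarrow> (nat \<Rightarrow> real) \<Rightarrow> nat \<Rightarrow> real" where
  "rr k l m i = sqrt ((k i)\<^sup>2 + (l i)\<^sup>2 + (m i)\<^sup>2)"

definition Delta :: "real \<Rightarrow> real \<Rightarrow> (nat \<Rightarrow> real) \<Rightarrow> (nat \<Rightarrow> real) \<Rightarrow> (nat \<Rightarrow> real) \<Rightarrow> real" where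
  "Delta c0 rho0 k l m = c0 * rho0 / (k 3 * k 4) *
     (rr k l m 1 * (k 2 * k 3 * k 4 + k 3 * m 2 * m 4 + k 4 * l 2 * l 3)
    + rr k l m 2 * (k 1 * k 3 * k 4 + k 3 * m 1 * m 4 + k 4 * l 1 * l 3))"

definition Z1 :: "real \<Rightarrow> real \<Rightarrow> (nat \<Rightarrow> real) \<Rightarrow> (nat \<Rightarrow> real) \<Rightarrow> (nat \<Rightarrow> real) \<Rightarrow>
   ((pt3 \<Rightarrow> real) \<times> (pt3 \<Rightarrow> real) \<times> (pt3 \<Rightarrow> real) \<times> (pt3 \<Rightarrow> real)) set" where
  "Z1 c0 rho0 k l m = {(F, G, H, P). \<exists>f :: nat \<Rightarrow> real \<Rightarrow> real.
     (\<forall>i\<in>{1..4}. f i C1_differentiable_on UNIV) \<and>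
     (\<forall>x y z. let \<xi> = (\<lambda>i. k i * x + l i * y + m i * z) in
        F (x, y, z) = k 1 * f 1 (\<xi> 1) + k 2 * f 2 (\<xi> 2) + l 3 / k 3 * f 3 (\<xi> 3) + m 4 / k 4 * f 4 (\<xi> 4) \<and>
        G (x, y, z) = l 1 * f 1 (\<xi> 1) + l 2 * f 2 (\<xi> 2) - f 3 (\<xi> 3) \<and>
        H (x, y, z) = m 1 * f 1 (\<xi> 1) + m 2 * f 2 (\<xi> 2) - f 4 (\<xi> 4) \<and>
        P (x, y, z) = - c0 * rho0 * rr k l m 1 * f 1 (\<xi> 1) + c0 * rho0 * rr k l m 2 * f 2 (\<xi> 2))}"

end

theory Submission
  imports Defs "HOL-Real_Asymp.Real_Asymp"
begin

definition lf :: "real \<Rightarrow> real \<Rightarrow> real \<Rightarrow> real \<Rightarrow> pt4 \<Rightarrow> real" where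
  "lf A B C b w = A * fst w + B * fst (snd w) + C * fst (snd (snd w)) - b * snd (snd (snd w))"

lemma comp_growth_zero: "comp_growth (\<lambda>w. 0) = -\<infinity>"
proof -
  have "Limsup at_top (\<lambda>t::real. eln_abs 0 / ereal t) = -\<infinity>"
  proof -
    have "Limsup at_top (\<lambda>t::real. eln_abs 0 / ereal t) \<le> Limsup at_top (\<lambda>t::real. -\<infinity>)"
      apply (rule Limsup_mono)
      using eventually_gt_at_top[of "0::real"]
      by (auto simp: eln_abs_def elim!: eventually_mono)
    also have "\<dots> = -\<infinity>" by (simp add: Limsup_const)
    finally show ?thesis by simp
  qed
  then show ?thesis unfolding comp_growth_def by simp
qed

lemma comp_growth_gen:
  fixes \<phi> :: "real \<Rightarrow> real"
  assumes c: "c \<noteq> 0"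
    and lim: "\<And>s. ((\<lambda>t. ereal ((ln \<bar>c\<bar> + \<phi> (s - b * t)) / t)) \<longlongrightarrow> M) at_top"
  shows "comp_growth (\<lambda>w. c * exp (\<phi> (lf A B C b w))) = M"
proof -
  have "Limsup at_top (\<lambda>t::real. eln_abs (c * exp (\<phi> (lf A B C b (x, y, z, t)))) / ereal t) = M" for x y z
  proof -
    have "Limsup at_top (\<lambda>t::real. eln_abs (c * exp (\<phi> (lf A B C b (x, y, z, t)))) / ereal t)
       = Limsup at_top (\<lambda>t. ereal ((ln \<bar>c\<bar> + \<phi> ((A*x+B*y+C*z) - b * t)) / t))"
      apply (rule Limsup_eq)
      apply (rule eventually_mono[OF eventually_gt_at_top[of "0::real"]])
      using c by (simp add: eln_abs_def lf_def abs_mult ln_mult)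
    also have "\<dots> = M" by (rule lim_imp_Limsup[OF trivial_limit_at_top_linorder lim])
    finally show ?thesis .
  qed
  then show ?thesis unfolding comp_growth_def by simp
qed

lemma lim_lin:
  assumes "b \<noteq> 0"
  shows "((\<lambda>t. ereal ((L + (-\<mu>/b) * (s - b * t)) / t)) \<longlongrightarrow> ereal \<mu>) at_top"
proof -
  have "((\<lambda>t. (L + (-\<mu>/b) * s) / t + \<mu>) \<longlongrightarrow> \<mu>) at_top" by real_asymp
  then have "((\<lambda>t. (L + (-\<mu>/b) * (s - b * t)) / t) \<longlongrightarrow> \<mu>) at_top"
    apply (rule Lim_transform_eventually)
    apply (rule eventually_mono[OF eventually_gt_at_top[of "0::real"]])
    using assms by (simp add: field_simps)
  then show ?thesis by (rule tendsto_ereal)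
qed

lemma lim_sq:
  assumes "b \<noteq> 0"
  shows "((\<lambda>t. ereal ((L + (s - b * t)^2) / t)) \<longlongrightarrow> \<infinity>) at_top"
proof -
  have bb: "b^2 > 0" using assms by simp
  have "filterlim (\<lambda>t::real. b\<^sup>2 * t - 2 * b * s + (L + s\<^sup>2) / t) at_top at_top"
    using bb by real_asymp
  then have "filterlim (\<lambda>t. (L + (s - b * t)^2) / t) at_top at_top"
    apply (rule filterlim_cong[THEN iffD1, OF refl refl, rotated])
    apply (rule eventually_mono[OF eventually_gt_at_top[of "0::real"]])
    by (simp add: field_simps power2_eq_square)
  then show ?thesis by (simp add: tendsto_PInfty_eq_at_top)
qed

lemma lf_deriv: "(lf A B C b has_derivative lf A B C b) (at w)"
  unfolding lf_def[abs_def]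
  by (rule has_derivative_eq_rhs, (rule derivative_intros)+) (auto simp: algebra_simps)

lemma comp_deriv:
  assumes d: "\<And>s. (g has_real_derivative g' s) (at s)"
  shows "((\<lambda>w. c * g (lf A B C b w)) has_derivative (\<lambda>h. c * (g' (lf A B C b w) * lf A B C b h))) (at w)"
proof -
  have "((\<lambda>w. g (lf A B C b w)) has_derivative (\<lambda>h. g' (lf A B C b w) * lf A B C b h)) (at w)"
    using has_derivative_compose[OF lf_deriv has_field_derivative_imp_has_derivative[OF d]] by simp
  then show ?thesis by (rule has_derivative_mult_right)
qed

lemma C1_comp:
  assumes d: "\<And>s. (g has_real_derivative g' s) (at s)" and cg: "continuous_on UNIV g'"
  shows "C1_R4 (\<lambda>w. c * g (lf A B C b w))"
proof -
  have bl: "bounded_linear (lf A B C b)" using lf_deriv has_derivative_bounded_linear by blast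
  define D where "D w = (c * g' (lf A B C b w)) *\<^sub>R Blinfun (lf A B C b)" for w
  have "blinfun_apply (D w) = (\<lambda>h. c * (g' (lf A B C b w) * lf A B C b h))" for w
    unfolding D_def by (rule ext) (simp add: scaleR_blinfun.rep_eq bounded_linear_Blinfun_apply[OF bl])
  moreover have "continuous_on UNIV D"
    unfolding D_def
    apply (intro continuous_intros)
    apply (rule continuous_on_compose2[OF cg])
    using bl by (auto intro: linear_continuous_on)
  ultimately show ?thesis unfolding C1_R4_def using comp_deriv[OF d] by metis
qed

lemma comp_partials:
  assumes d: "\<And>s. (g has_real_derivative g' s) (at s)"
  shows "dx (\<lambda>w. c * g (lf A B C b w)) w = c * g' (lf A B C b w) * A"
    and "dy (\<lambda>w. c * g (lf A B C b w)) w = c * g' (lf A B C b w) * B"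
    and "dz (\<lambda>w. c * g (lf A B C b w)) w = c * g' (lf A B C b w) * C"
    and "dt (\<lambda>w. c * g (lf A B C b w)) w = - c * g' (lf A B C b w) * b"
proof -
  have fd: "frechet_derivative (\<lambda>w. c * g (lf A B C b w)) (at w) = (\<lambda>h. c * (g' (lf A B C b w) * lf A B C b h))"
    using frechet_derivative_at[OF comp_deriv[OF d, of c A B C b w]] by simp
  show "dx (\<lambda>w. c * g (lf A B C b w)) w = c * g' (lf A B C b w) * A"
    "dy (\<lambda>w. c * g (lf A B C b w)) w = c * g' (lf A B C b w) * B"
    "dz (\<lambda>w. c * g (lf A B C b w)) w = c * g' (lf A B C b w) * C"
    "dt (\<lambda>w. c * g (lf A B C b w)) w = - c * g' (lf A B C b w) * b"
    unfolding dx_def dy_def dz_def dt_def fd by (simp_all add: lf_def)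
qed

lemma construct:
  fixes U0 c0 rho0 :: real and k l m :: "nat \<Rightarrow> real" and \<phi> \<phi>' :: "real \<Rightarrow> real"
  assumes k3: "k 3 \<noteq> 0" and U0: "U0 \<noteq> 0"
    and d\<phi>: "\<And>s. (\<phi> has_real_derivative \<phi>' s) (at s)" and c\<phi>: "continuous_on UNIV \<phi>'"
    and lim: "\<And>c s. c \<noteq> 0 \<Longrightarrow> ((\<lambda>t. ereal ((ln \<bar>c\<bar> + \<phi> (s - (k 3 * U0) * t)) / t)) \<longlongrightarrow> M) at_top"
  shows "\<exists>FGHP vx vy vz p. FGHP \<in> Z1 c0 rho0 k l m \<and>
            lin_euler_solution U0 c0 rho0 vx vy vz p \<and> has_initial_value vx vy vz p FGHP \<and>
            growth_rate vx vy vz p = M"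
proof -
  define g where "g s = exp (\<phi> s)" for s
  define g' where "g' s = exp (\<phi> s) * \<phi>' s" for s
  define L where "L = lf (k 3) (l 3) (m 3) (k 3 * U0)"
  have dg: "(g has_real_derivative g' s) (at s)" for s
    unfolding g_def[abs_def] g'_def by (rule derivative_eq_intros d\<phi> refl)+
  have cg0: "continuous_on UNIV \<phi>" using d\<phi>
    by (meson DERIV_isCont continuous_at_imp_continuous_on)
  have cg'': "continuous_on UNIV g'"
    unfolding g'_def using c\<phi> cg0 by (intro continuous_intros) (auto intro: continuous_on_compose2[OF continuous_on_exp])
  define vx where "vx = (\<lambda>w. (l 3 / k 3) * g (L w))"
  define vy where "vy = (\<lambda>w. (-1) * g (L w))"
  define vz where "vz = (\<lambda>w. 0 * g (L w))"
  define F :: "pt3 \<Rightarrow> real" where "F = (\<lambda>(x, y, z). (l 3 / k 3) * g (k 3 * x + l 3 * y + m 3 * z))"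
  define G :: "pt3 \<Rightarrow> real" where "G = (\<lambda>(x, y, z). - g (k 3 * x + l 3 * y + m 3 * z))"
  define H :: "pt3 \<Rightarrow> real" where "H = (\<lambda>_. 0)"
  define f :: "nat \<Rightarrow> real \<Rightarrow> real" where "f = (\<lambda>i. if i = 3 then g else (\<lambda>_. 0))"
  have gC1: "g C1_differentiable_on UNIV"
    unfolding C1_differentiable_on_def using dg cg''
    by (auto simp: has_real_derivative_iff_has_vector_derivative[symmetric])
  have zC1: "(\<lambda>_::real. 0::real) C1_differentiable_on UNIV"
    unfolding C1_differentiable_on_def
    by (rule exI[of _ "\<lambda>_. 0"]) (auto intro: derivative_eq_intros)
  have Z: "(F, G, H, H) \<in> Z1 c0 rho0 k l m"
    unfolding Z1_def
    apply (simp, rule exI[of _ f])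
    using gC1 zC1 k3 by (auto simp: f_def F_def G_def H_def Let_def)
  define u where "u c = (\<lambda>w. c * g (L w))" for c
  have uC: "C1_R4 (u c)" for c unfolding u_def L_def by (rule C1_comp[OF dg cg''])
  have ud: "dx (u c) w = c * g' (L w) * k 3" "dy (u c) w = c * g' (L w) * l 3"
    "dz (u c) w = c * g' (L w) * m 3" "dt (u c) w = - c * g' (L w) * (k 3 * U0)" for c w
    unfolding u_def L_def by (rule comp_partials[OF dg])+
  have uv: "vx = u (l 3 / k 3)" "vy = u (-1)" "vz = u 0"
    unfolding vx_def vy_def vz_def u_def by auto
  have sol: "lin_euler_solution U0 c0 rho0 vx vy vz vz"
    unfolding lin_euler_solution_def uv
    using uC k3 by (simp add: ud field_simps)
  have iv: "has_initial_value vx vy vz vz (F, G, H, H)"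
    unfolding has_initial_value_def vx_def vy_def vz_def F_def G_def H_def L_def lf_def by simp
  have cgx: "comp_growth (\<lambda>w. c * g (L w)) = (if c = 0 then -\<infinity> else M)" for c
  proof (cases "c = 0")
    case True then show ?thesis using comp_growth_zero by simp
  next
    case False then show ?thesis unfolding g_def L_def
      by (simp add: comp_growth_gen[OF False lim[OF False]])
  qed
  have "growth_rate vx vy vz vz = M"
    unfolding growth_rate_def vx_def vy_def vz_def cgx by (auto simp: max_def)
  then show ?thesis using Z sol iv by blast
qed

theorem proposition13:
  fixes U0 c0 rho0 :: real and k l m :: "nat \<Rightarrow> real"
  assumes "U0 > 0" and "c0 > 0" and "rho0 > 0"
    and "k 1 * k 2 * k 3 * k 4 \<noteq> 0"
    and "Delta c0 rho0 k l m \<noteq> 0"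
  shows "(\<forall>\<mu>::real. \<exists>FGHP vx vy vz p. FGHP \<in> Z1 c0 rho0 k l m \<and>
            lin_euler_solution U0 c0 rho0 vx vy vz p \<and> has_initial_value vx vy vz p FGHP \<and>
            growth_rate vx vy vz p = ereal \<mu>)
       \<and> (\<exists>FGHP vx vy vz p. FGHP \<in> Z1 c0 rho0 k l m \<and>
            lin_euler_solution U0 c0 rho0 vx vy vz p \<and> has_initial_value vx vy vz p FGHP \<and>
            growth_rate vx vy vz p = \<infinity>)"
proof -
  have k3: "k 3 \<noteq> 0" using assms(4) by auto
  have U0: "U0 \<noteq> 0" using assms(1) by auto
  have b: "k 3 * U0 \<noteq> 0" using k3 U0 by simp
  show ?thesis
  proof
    show "\<forall>\<mu>::real. \<exists>FGHP vx vy vz p. FGHP \<in> Z1 c0 rho0 k l m \<and>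
            lin_euler_solution U0 c0 rho0 vx vy vz p \<and> has_initial_value vx vy vz p FGHP \<and>
            growth_rate vx vy vz p = ereal \<mu>"
    proof
      fix \<mu> :: real
      show "\<exists>FGHP vx vy vz p. FGHP \<in> Z1 c0 rho0 k l m \<and>
            lin_euler_solution U0 c0 rho0 vx vy vz p \<and> has_initial_value vx vy vz p FGHP \<and>
            growth_rate vx vy vz p = ereal \<mu>"
        apply (rule construct[where k = k and ?U0.0 = U0 and \<phi> = "\<lambda>s. (-\<mu> / (k 3 * U0)) * s" and \<phi>' = "\<lambda>_. -\<mu> / (k 3 * U0)", OF k3 U0])
          apply (rule derivative_eq_intros refl)+
          apply simp
         apply (rule continuous_on_const)
        by (rule lim_lin[OF b])
    qed
  next
    show "\<exists>FGHP vx vy vz p. FGHP \<in> Z1 c0 rho0 k l m \<and>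
            lin_euler_solution U0 c0 rho0 vx vy vz p \<and> has_initial_value vx vy vz p FGHP \<and>
            growth_rate vx vy vz p = \<infinity>"
      apply (rule construct[where k = k and ?U0.0 = U0 and \<phi> = "\<lambda>s. s\<^sup>2" and \<phi>' = "\<lambda>s. 2 * s", OF k3 U0])
        apply (rule derivative_eq_intros refl | simp)+
      by (rule lim_sq[OF b])
  qed
qed

end
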